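(* In the standing setting below, suppose $c$ does not satisfy Loeper's property. Then there exist $y_0,y_1$ in the interior of $\mathbb{Y}$, $x_0,x_1$ in the interior of $\mathbb{X}$, $h_1'\in\mathbb{R}$, and a point $x_{t_0}=\exp^c_{y_0}(t_0p_1+(1-t_0)p_0)$ with $t_0\in(0,1)$, where $p_i=-D_yc(x_i,y_0)$, such that $-c(x_i,y_1)+h_1'<-c(x_i,y_0)$ for $i=0,1$, and $-c(x_{t_0},y_1)+h_1'>-c(x_{t_0},y_0)$.
   Context: Standing setting: $\mathbb{X},\mathbb{Y}\subset\mathbb{R}^n$ are compact with non-empty interior; $c:\mathbb{X}\times\mathbb{Y}\to\mathbb{R}$ has continuous $D_xc$, $D_yc$, and continuous mixed second derivatives with $D^2_{xy}c=(D^2_{yx}c)^T$; for each $x$ the map $y\mapsto -D_xc(x,y)$ is injective on $\mathbb{Y}$ and for each $y$ the map $x\mapsto -D_yc(x,y)$ is injective on $\mathbb{X}$; $D^2_{xy}c(x,y)$ is invertible everywhere; for every $y$ the set $[\mathbb{X}]_y=\{-D_yc(x,y):x\in\mathbb{X}\}$ is convex and for every $x$ the set $\{-D_xc(x,y):y\in\mathbb{Y}\}$ is convex. $\exp^c_y:[\mathbb{X}]_y\to\mathbb{X}$ is the inverse of $x\mapsto -D_yc(x,y)$; the $c$-segment with respect to $y$ from $x_0$ to $x_1$ is $\{\exp^c_y(tp_1+(1-t)p_0):t\in[0,1]\}$ with $p_i=-D_yc(x_i,y)$. Loeper's property: for all $x_0,x_1\in\mathbb{X}$, $y_0,y\in\mathbb{Y}$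 and every $x_t$ on the $c$-segment with respect to $y_0$ from $x_0$ to $x_1$, $-c(x_t,y)+c(x_t,y_0)\le\max\{-c(x_i,y)+c(x_i,y_0):i=0,1\}$. *)

theory Defs
  imports "HOL-Analysis.Analysis"
begin

text \<open>The c-exponential map with respect to y: the inverse of x \<mapsto> - D_y c(x,y) on X,
  defined on [X]_y.  Here Dy x y stands for D_y c(x,y).\<close>
definition cexp :: "('a::euclidean_space \<Rightarrow> 'a \<Rightarrow> 'a) \<Rightarrow> 'a set \<Rightarrow> 'a \<Rightarrow> 'a \<Rightarrow> 'a" where
  "cexp Dy X y p = inv_into X (\<lambda>x. - Dy x y) p"

definition loeper :: "('a::euclidean_space \<Rightarrow> 'a \<Rightarrow> real) \<Rightarrow> ('a \<Rightarrow> 'a \<Rightarrow> 'a) \<Rightarrow> 'a set \<Rightarrow> 'a set \<Rightarrow> bool" where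
  "loeper c Dy X Y \<longleftrightarrow>
     (\<forall>x0\<in>X. \<forall>x1\<in>X. \<forall>y0\<in>Y. \<forall>y\<in>Y. \<forall>t\<in>{0..1::real}.
        (let xt = cexp Dy X y0 (t *\<^sub>R (- Dy x1 y0) + (1 - t) *\<^sub>R (- Dy x0 y0))
         in - c xt y + c xt y0 \<le> max (- c x0 y + c x0 y0) (- c x1 y + c x1 y0)))"

end

theory Submission imports Defs "HOL-Homology.Invariance_of_Domain" begin

lemma dense_int:
  fixes A :: "'a::euclidean_space set" and phi :: "'a \<Rightarrow> 'a"
  assumes A: "compact A" "interior A \<noteq> {}"
    and cont: "continuous_on A phi" and inj: "inj_on phi A" and conv: "convex (phi ` A)"
  shows "A \<subseteq> closure (interior A)"
proof -
  define K where "K = phi ` A"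
  define psi where "psi = inv_into A phi"
  have psi_cont: "continuous_on K psi"
    unfolding K_def psi_def using continuous_on_inv[OF cont A(1)] inj by (simp add: inv_into_f_f)
  have Kc: "compact K" unfolding K_def using compact_continuous_image[OF cont A(1)] .
  have "open (phi ` interior A)"
    using invariance_of_domain continuous_on_subset[OF cont interior_subset] inj_on_subset[OF inj interior_subset] by blast
  then have "phi ` interior A \<subseteq> interior K"
    unfolding K_def by (meson image_mono interior_maximal interior_subset)
  then have intK: "interior K \<noteq> {}" using A(2) by blast
  have ck: "closure (interior K) = K"
    using convex_closure_interior[OF conv[folded K_def] intK] Kc compact_imp_closed closure_closed by metis
  have "open (psi ` interior K)"
    apply (rule invariance_of_domain)
      apply (meson continuous_on_subset interior_subset psi_cont)
     apply simp
    unfolding psi_def K_def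
    by (meson inj_on_inv_into interior_subset inj_on_subset)
  moreover have "psi ` interior K \<subseteq> A"
    unfolding psi_def K_def by (meson image_subsetI interior_subset inv_into_into subsetD)
  ultimately have "psi ` interior K \<subseteq> interior A" by (simp add: interior_maximal)
  then have "psi ` closure (interior K) \<subseteq> closure (interior A)"
    using closure_subset by (intro image_closure_subset) (auto simp: ck psi_cont)
  moreover have "psi ` K = A" unfolding psi_def K_def using inj by simp
  ultimately show ?thesis using ck by simp
qed

lemma cexp_inv:
  assumes "inj_on (\<lambda>x. - Dy x y) X" "x \<in> X"
  shows "cexp Dy X y (- Dy x y) = x"
  unfolding cexp_def using inv_into_f_f[of "\<lambda>x. - Dy x y" X x] assms by simp

lemma cexp_cont:
  fixes Dy :: "'a::euclidean_space \<Rightarrow> 'a \<Rightarrow> 'a"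
  assumes "compact X" "compact Y" "continuous_on (X \<times> Y) (\<lambda>z. Dy (fst z) (snd z))"
    and inj: "\<And>y. y \<in> Y \<Longrightarrow> inj_on (\<lambda>x. - Dy x y) X"
  shows "continuous_on ((\<lambda>z. (- Dy (fst z) (snd z), snd z)) ` (X \<times> Y)) (\<lambda>q. cexp Dy X (snd q) (fst q))"
proof -
  let ?g = "\<lambda>q. (cexp Dy X (snd q) (fst q), snd q)"
  have "continuous_on (X \<times> Y) (\<lambda>z. (- Dy (fst z) (snd z), snd z))"
    using assms(3) by (intro continuous_intros) auto
  moreover have "compact (X \<times> Y)" using assms by (simp add: compact_Times)
  moreover have "\<forall>z\<in>X \<times> Y. ?g (- Dy (fst z) (snd z), snd z) = z"
    using inj by (auto simp: cexp_inv)
  ultimately have "continuous_on ((\<lambda>z. (- Dy (fst z) (snd z), snd z)) ` (X \<times> Y)) ?g"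
    by (rule continuous_on_inv)
  from continuous_on_fst[OF this] show ?thesis by simp
qed
theorem lemma5p3:
  fixes X Y :: "'a::euclidean_space set"
    and c :: "'a \<Rightarrow> 'a \<Rightarrow> real"
    and Dx Dy :: "'a \<Rightarrow> 'a \<Rightarrow> 'a"
    and Dxy Dyx :: "'a \<Rightarrow> 'a \<Rightarrow> ('a \<Rightarrow>\<^sub>L 'a)"
  assumes X: "compact X" "interior X \<noteq> {}"
    and Y: "compact Y" "interior Y \<noteq> {}"
    and c_cont: "continuous_on (X \<times> Y) (\<lambda>z. c (fst z) (snd z))"
    and Dx: "\<And>x y. x \<in> X \<Longrightarrow> y \<in> Y \<Longrightarrow>
               ((\<lambda>x'. c x' y) has_derivative (\<lambda>h. Dx x y \<bullet> h)) (at x within X)"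
    and Dy: "\<And>x y. x \<in> X \<Longrightarrow> y \<in> Y \<Longrightarrow>
               ((\<lambda>y'. c x y') has_derivative (\<lambda>h. Dy x y \<bullet> h)) (at y within Y)"
    and Dx_cont: "continuous_on (X \<times> Y) (\<lambda>z. Dx (fst z) (snd z))"
    and Dy_cont: "continuous_on (X \<times> Y) (\<lambda>z. Dy (fst z) (snd z))"
    and Dxy: "\<And>x y. x \<in> X \<Longrightarrow> y \<in> Y \<Longrightarrow>
               ((\<lambda>y'. Dx x y') has_derivative blinfun_apply (Dxy x y)) (at y within Y)"
    and Dyx: "\<And>x y. x \<in> X \<Longrightarrow> y \<in> Y \<Longrightarrow>
               ((\<lambda>x'. Dy x' y) has_derivative blinfun_apply (Dyx x y)) (at x within X)"
    and Dxy_cont: "continuous_on (X \<times> Y) (\<lambda>z. Dxy (fst z) (snd z))"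
    and Dyx_cont: "continuous_on (X \<times> Y) (\<lambda>z. Dyx (fst z) (snd z))"
    and transp: "\<And>x y u v. x \<in> X \<Longrightarrow> y \<in> Y \<Longrightarrow> Dxy x y u \<bullet> v = u \<bullet> Dyx x y v"
    and twist_x: "\<And>x. x \<in> X \<Longrightarrow> inj_on (\<lambda>y. - Dx x y) Y"
    and twist_y: "\<And>y. y \<in> Y \<Longrightarrow> inj_on (\<lambda>x. - Dy x y) X"
    and nondeg: "\<And>x y. x \<in> X \<Longrightarrow> y \<in> Y \<Longrightarrow> bij (blinfun_apply (Dxy x y))"
    and convX: "\<And>y. y \<in> Y \<Longrightarrow> convex ((\<lambda>x. - Dy x y) ` X)"
    and convY: "\<And>x. x \<in> X \<Longrightarrow> convex ((\<lambda>y. - Dx x y) ` Y)"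
    and not_loeper: "\<not> loeper c Dy X Y"
  shows "\<exists>y0 y1 x0 x1 h1' t0.
           y0 \<in> interior Y \<and> y1 \<in> interior Y \<and> x0 \<in> interior X \<and> x1 \<in> interior X \<and>
           t0 \<in> {0<..<1::real} \<and>
           (let xt0 = cexp Dy X y0 (t0 *\<^sub>R (- Dy x1 y0) + (1 - t0) *\<^sub>R (- Dy x0 y0))
            in - c x0 y1 + h1' < - c x0 y0 \<and> - c x1 y1 + h1' < - c x1 y0 \<and>
               - c xt0 y1 + h1' > - c xt0 y0)"
  proof -
  from not_loeper obtain a0 a1 b0 b t where
    ab: "a0 \<in> X" "a1 \<in> X" "b0 \<in> Y" "b \<in> Y" "t \<in> {0..1::real}" and
    bad: "- c (cexp Dy X b0 (t *\<^sub>R (- Dy a1 b0) + (1 - t) *\<^sub>R (- Dy a0 b0))) b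
          + c (cexp Dy X b0 (t *\<^sub>R (- Dy a1 b0) + (1 - t) *\<^sub>R (- Dy a0 b0))) b0
          > max (- c a0 b + c a0 b0) (- c a1 b + c a1 b0)"
    unfolding loeper_def Let_def by (auto simp: not_le)
  have t01: "t \<in> {0<..<1}"
  proof -
    have "t \<noteq> 0"
    proof
      assume "t = 0"
      then show False using bad cexp_inv[where Dy=Dy and y=b0 and X=X and x=a0, OF twist_y[OF ab(3)] ab(1)] by simp
    qed
    moreover have "t \<noteq> 1"
    proof
      assume "t = 1"
      then show False using bad cexp_inv[where Dy=Dy and y=b0 and X=X and x=a1, OF twist_y[OF ab(3)] ab(2)] by simp
    qed
    ultimately show ?thesis using ab(5) by auto
  qed
  define S where "S = X \<times> X \<times> Y \<times> Y"
  define M where "M = (\<lambda>z::'a \<times> 'a \<times> 'a \<times> 'a.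
     (t *\<^sub>R (- Dy (fst (snd z)) (fst (snd (snd z)))) + (1 - t) *\<^sub>R (- Dy (fst z) (fst (snd (snd z)))),
      fst (snd (snd z))))"
  define XT where "XT = (\<lambda>z. cexp Dy X (snd (M z)) (fst (M z)))"
  define G where "G = (\<lambda>z. (- c (XT z) (snd (snd (snd z))) + c (XT z) (fst (snd (snd z))))
     - max (- c (fst z) (snd (snd (snd z))) + c (fst z) (fst (snd (snd z))))
           (- c (fst (snd z)) (snd (snd (snd z))) + c (fst (snd z)) (fst (snd (snd z)))))"
  let ?Phi = "(\<lambda>z. (- Dy (fst z) (snd z), snd z)) ` (X \<times> Y)"
  have sub1: "(\<lambda>z. (fst (snd z), fst (snd (snd z)))) ` S \<subseteq> X \<times> Y"
    and sub2: "(\<lambda>z. (fst z, fst (snd (snd z)))) ` S \<subseteq> X \<times> Y"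
    unfolding S_def by auto
  have pc1: "continuous_on S (\<lambda>z. (fst (snd z), fst (snd (snd z))))"
    and pc2: "continuous_on S (\<lambda>z. (fst z, fst (snd (snd z))))"
    by (intro continuous_intros)+
  have Dyc: "continuous_on S (\<lambda>z. Dy (fst (snd z)) (fst (snd (snd z))))"
            "continuous_on S (\<lambda>z. Dy (fst z) (fst (snd (snd z))))"
    using continuous_on_compose2[OF Dy_cont pc1 sub1] continuous_on_compose2[OF Dy_cont pc2 sub2]
    by simp_all
  have Mc: "continuous_on S M" unfolding M_def
    using Dyc by (intro continuous_intros) auto
  have Min: "M ` S \<subseteq> ?Phi"
  proof
    fix q assume "q \<in> M ` S"
    then obtain z where z: "z \<in> S" "q = M z" by blast
    let ?y = "fst (snd (snd z))"
    have y: "?y \<in> Y" and xx: "fst z \<in> X" "fst (snd z) \<in> X" using z(1) by (auto simp: S_def)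
    have "t *\<^sub>R (- Dy (fst (snd z)) ?y) + (1 - t) *\<^sub>R (- Dy (fst z) ?y) \<in> (\<lambda>x. - Dy x ?y) ` X"
      using convexD[OF convX[OF y], of "- Dy (fst (snd z)) ?y" "- Dy (fst z) ?y" t "1 - t"] xx t01
      by auto
    then obtain x where "x \<in> X" "t *\<^sub>R (- Dy (fst (snd z)) ?y) + (1 - t) *\<^sub>R (- Dy (fst z) ?y) = - Dy x ?y"
      by auto
    then show "q \<in> ?Phi" using y z(2) unfolding M_def by force
  qed
  have XTc: "continuous_on S XT" unfolding XT_def
    by (rule continuous_on_compose2[OF cexp_cont[OF X(1) Y(1) Dy_cont twist_y] Mc Min])
  have XTin: "XT z \<in> X" if "z \<in> S" for z
  proof -
    have "M z \<in> ?Phi" using Min that by (meson image_subset_iff)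
    then obtain w where w: "w \<in> X \<times> Y" "M z = (- Dy (fst w) (snd w), snd w)"
      unfolding image_iff by metis
    define x y where "x = fst w" and "y = snd w"
    have xy: "x \<in> X" "y \<in> Y" "M z = (- Dy x y, y)" using w unfolding x_def y_def by auto
    have "XT z = cexp Dy X y (- Dy x y)" unfolding XT_def using xy(3) by simp
    also have "\<dots> = x" by (rule cexp_inv[where Dy=Dy and y=y and X=X and x=x, OF twist_y[OF xy(2)] xy(1)])
    finally show ?thesis using xy(1) by simp
  qed
  have cc: "continuous_on S (\<lambda>z. c (A z) (B z))"
    if "continuous_on S A" "continuous_on S B" "\<And>z. z \<in> S \<Longrightarrow> A z \<in> X" "\<And>z. z \<in> S \<Longrightarrow> B z \<in> Y"
    for A B
  proof -
    have 1: "continuous_on S (\<lambda>z. (A z, B z))" using that(1,2) by (rule continuous_on_Pair)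
    have 2: "(\<lambda>z. (A z, B z)) ` S \<subseteq> X \<times> Y" using that(3,4) by auto
    show ?thesis using continuous_on_compose2[OF c_cont 1 2] by simp
  qed
  have f4: "continuous_on S (\<lambda>z. snd (snd (snd z)))" "continuous_on S (\<lambda>z. fst (snd (snd z)))"
    "continuous_on S (\<lambda>z. fst z)" "continuous_on S (\<lambda>z. fst (snd z))"
    by (intro continuous_intros)+
  have m4: "\<And>z. z \<in> S \<Longrightarrow> snd (snd (snd z)) \<in> Y" "\<And>z. z \<in> S \<Longrightarrow> fst (snd (snd z)) \<in> Y"
    "\<And>z. z \<in> S \<Longrightarrow> fst z \<in> X" "\<And>z. z \<in> S \<Longrightarrow> fst (snd z) \<in> X"
    unfolding S_def by auto
  have Gc: "continuous_on S G" unfolding G_def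
    using cc[OF XTc f4(1) XTin m4(1)] cc[OF XTc f4(2) XTin m4(2)]
      cc[OF f4(3) f4(1) m4(3) m4(1)] cc[OF f4(3) f4(2) m4(3) m4(2)]
      cc[OF f4(4) f4(1) m4(4) m4(1)] cc[OF f4(4) f4(2) m4(4) m4(2)]
    by (intro continuous_on_diff continuous_on_add continuous_on_minus continuous_on_max)
  define z0 where "z0 = (a0, a1, b0, b)"
  have z0S: "z0 \<in> S" using ab by (simp add: z0_def S_def)
  have Gz0: "G z0 > 0" using bad by (simp add: G_def XT_def M_def z0_def)
  have cy: "continuous_on X (\<lambda>x. - Dy x b0)"
  proof -
    have 1: "continuous_on X (\<lambda>x. (x, b0))" by (intro continuous_intros)
    have 2: "(\<lambda>x. (x, b0)) ` X \<subseteq> X \<times> Y" using ab(3) by auto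
    show ?thesis using continuous_on_compose2[OF Dy_cont 1 2] by (simp add: continuous_on_minus)
  qed
  have cx: "continuous_on Y (\<lambda>y. - Dx a0 y)"
  proof -
    have 1: "continuous_on Y (\<lambda>y. (a0, y))" by (intro continuous_intros)
    have 2: "(\<lambda>y. (a0, y)) ` Y \<subseteq> X \<times> Y" using ab(1) by auto
    show ?thesis using continuous_on_compose2[OF Dx_cont 1 2] by (simp add: continuous_on_minus)
  qed
  have dX: "X \<subseteq> closure (interior X)"
    by (rule dense_int[OF X cy twist_y[OF ab(3)] convX[OF ab(3)]])
  have dY: "Y \<subseteq> closure (interior Y)"
    by (rule dense_int[OF Y cx twist_x[OF ab(1)] convY[OF ab(1)]])
  have "S \<subseteq> closure (interior S)"
    unfolding S_def interior_Times closure_Times using dX dY by auto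
  with z0S have z0cl: "z0 \<in> closure (interior S)" by blast
  from Gc[unfolded continuous_on_iff, rule_format, OF z0S Gz0] obtain d where
    d: "d > 0" "\<forall>z\<in>S. dist z z0 < d \<longrightarrow> dist (G z) (G z0) < G z0"
    by blast
  from z0cl d(1) obtain z where z: "z \<in> interior S" "dist z z0 < d"
    unfolding closure_approachable by blast
  have zS: "z \<in> S" using z(1) interior_subset by blast
  have "dist (G z) (G z0) < G z0" using d(2) zS z(2) by blast
  then have Gz: "G z > 0" by (simp add: dist_real_def abs_less_iff)
  obtain x0 x1 y0 y1 where zz: "z = (x0, x1, y0, y1)" by (cases z) auto
  have ints: "x0 \<in> interior X" "x1 \<in> interior X" "y0 \<in> interior Y" "y1 \<in> interior Y"
    using z(1) unfolding zz S_def interior_Times by auto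
  define xt where "xt = cexp Dy X y0 (t *\<^sub>R (- Dy x1 y0) + (1 - t) *\<^sub>R (- Dy x0 y0))"
  define v where "v = - c xt y1 + c xt y0"
  define m where "m = max (- c x0 y1 + c x0 y0) (- c x1 y1 + c x1 y0)"
  have vm: "v > m" using Gz by (simp add: G_def XT_def M_def zz xt_def v_def m_def)
  have "- c x0 y1 + (- (v + m) / 2) < - c x0 y0 \<and> - c x1 y1 + (- (v + m) / 2) < - c x1 y0 \<and>
        - c xt y1 + (- (v + m) / 2) > - c xt y0"
  proof -
    have "- c x0 y1 + c x0 y0 \<le> m" "- c x1 y1 + c x1 y0 \<le> m" unfolding m_def by auto
    moreover have "2 * (- (v + m) / 2) = - (v + m)" by simp
    ultimately show ?thesis using vm v_def by (intro conjI) linarith+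
  qed
  then show ?thesis using ints t01 unfolding Let_def xt_def by blast
qed

end
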